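(* Let $\Delta$ be a mesh. If a pair $(A,B)$ of functions on $\Delta$ is a discrete imprecise copula, then $(A^{\mathrm{BL}},B^{\mathrm{BL}})$ is an imprecise copula. Conversely, if $(A,B)$ is an imprecise copula on $[0,1]^2$, then $(A|_\Delta,B|_\Delta)$ is a discrete imprecise copula.
   Context: A mesh is $\Delta=\delta_x\times\delta_y$ with $\delta_x=\{0=x_0<\dots<x_p=1\}$, $\delta_y=\{0=y_0<\dots<y_q=1\}$. For a 1-increasing (nondecreasing in each variable) function $A$ on $\Delta$, $A^{\mathrm{BL}}$ is the function on $[0,1]^2$ which on each cell $[x_{i-1},x_i]\times[y_{j-1},y_j]$ is the bilinear interpolation (affine in each variable separately) of the corner values. Let $\mathbb{D}$ be $[0,1]^2$ or a mesh. A pair $(A,B)$ of functions $\mathbb{D}\to\mathbb{R}$ is an imprecise copula (called a discrete imprecise copula if $\mathbb{D}$ is a mesh) if both are grounded ($A(x,0)=A(0,y)=0$ for points in $\mathbb{D}$), both have $1$ as neutral element ($A(x,1)=x$, $A(1,y)=y$ for points in $\mathbb{D}$), and for every rectangle with corners in $\mathbb{D}$, with southwest corner $\mathbf{a}$, southeast $\mathbf{b}$, northeast $\mathbf{c}$, northwest $\mathbf{d}$: (IC1) $A(\mathbf{a})+B(\mathbf{c})-A(\mathbf{b})-A(\mathbf{d})\ge0$; (IC2) $B(\mathbf{a})+A(\mathbf{c})-A(\mathbf{b})-A(\mathbf{d})\ge0$; (IC3) $B(\mathbf{a})+B(\mathbf{c})-B(\mathbf{b})-A(\mathbf{d})\ge0$;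 (IC4) $B(\mathbf{a})+B(\mathbf{c})-A(\mathbf{b})-B(\mathbf{d})\ge0$. For an imprecise copula, $A$ and $B$ are quasi-copulas (discrete quasi-copulas in the mesh case), hence 1-increasing, and $A\le B$. *)

theory Defs
  imports "HOL-Analysis.Analysis"
begin

definition partition01 :: "real set \<Rightarrow> bool" where
  "partition01 X \<longleftrightarrow> finite X \<and> X \<subseteq> {0..1} \<and> 0 \<in> X \<and> 1 \<in> X"

text \<open>Imprecise copula on a domain D = X \<times> Y (X, Y either [0,1] or partitions).
  Rectangles with corners in D: a=(x1,y1) SW, b=(x2,y1) SE, c=(x2,y2) NE, d=(x1,y2) NW,
  with x1 \<le> x2 and y1 \<le> y2.\<close>
definition imprecise_copula ::
  "real set \<Rightarrow> real set \<Rightarrow> (real \<times> real \<Rightarrow> real) \<Rightarrow> (real \<times> real \<Rightarrow> real) \<Rightarrow> bool" where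
  "imprecise_copula X Y A B \<longleftrightarrow>
     (\<forall>x\<in>X. (0::real) \<in> Y \<longrightarrow> A (x, 0) = 0 \<and> B (x, 0) = 0) \<and>
     (\<forall>y\<in>Y. (0::real) \<in> X \<longrightarrow> A (0, y) = 0 \<and> B (0, y) = 0) \<and>
     (\<forall>x\<in>X. (1::real) \<in> Y \<longrightarrow> A (x, 1) = x \<and> B (x, 1) = x) \<and>
     (\<forall>y\<in>Y. (1::real) \<in> X \<longrightarrow> A (1, y) = y \<and> B (1, y) = y) \<and>
     (\<forall>x1\<in>X. \<forall>x2\<in>X. \<forall>y1\<in>Y. \<forall>y2\<in>Y. x1 \<le> x2 \<longrightarrow> y1 \<le> y2 \<longrightarrow>
        A (x1, y1) + B (x2, y2) - A (x2, y1) - A (x1, y2) \<ge> 0 \<and>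
        B (x1, y1) + A (x2, y2) - A (x2, y1) - A (x1, y2) \<ge> 0 \<and>
        B (x1, y1) + B (x2, y2) - B (x2, y1) - A (x1, y2) \<ge> 0 \<and>
        B (x1, y1) + B (x2, y2) - A (x2, y1) - B (x1, y2) \<ge> 0)"

definition cell_lo :: "real set \<Rightarrow> real \<Rightarrow> real" where
  "cell_lo X u = Max {x \<in> X. x \<le> u \<and> x < 1}"

definition cell_hi :: "real set \<Rightarrow> real \<Rightarrow> real" where
  "cell_hi X u = Min {x \<in> X. cell_lo X u < x}"

definition bilinear_ext ::
  "real set \<Rightarrow> real set \<Rightarrow> (real \<times> real \<Rightarrow> real) \<Rightarrow> real \<times> real \<Rightarrow> real" where
  "bilinear_ext X Y A = (\<lambda>(u, v).
     let x0 = cell_lo X u; x1 = cell_hi X u; y0 = cell_lo Y v; y1 = cell_hi Y v;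
         s = (u - x0) / (x1 - x0); t = (v - y0) / (y1 - y0)
     in (1 - s) * (1 - t) * A (x0, y0) + s * (1 - t) * A (x1, y0)
        + (1 - s) * t * A (x0, y1) + s * t * A (x1, y1))"

end

theory Submission
  imports Defs
begin

lemma cell_facts:
  assumes P: "partition01 X" and u: "0 \<le> u" "u \<le> 1"
  shows "cell_lo X u \<in> X" "cell_hi X u \<in> X" "cell_lo X u \<le> u" "u \<le> cell_hi X u"
    "cell_lo X u < cell_hi X u" "cell_lo X u < 1"
    "\<And>x. x \<in> X \<Longrightarrow> x \<le> u \<Longrightarrow> x < 1 \<Longrightarrow> x \<le> cell_lo X u"
    "\<And>x. x \<in> X \<Longrightarrow> cell_lo X u < x \<Longrightarrow> cell_hi X u \<le> x"
proof -
  have fin: "finite X" and sub: "X \<subseteq> {0..1}" and z: "0 \<in> X" and o: "1 \<in> X"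
    using P unfolding partition01_def by auto
  let ?S = "{x \<in> X. x \<le> u \<and> x < 1}"
  have fS: "finite ?S" using fin by auto
  have neS: "?S \<noteq> {}" using z u by auto
  have loS: "cell_lo X u \<in> ?S" unfolding cell_lo_def using Max_in[OF fS neS] .
  show lomax: "\<And>x. x \<in> X \<Longrightarrow> x \<le> u \<Longrightarrow> x < 1 \<Longrightarrow> x \<le> cell_lo X u"
    unfolding cell_lo_def using fS by (intro Max_ge) auto
  let ?T = "{x \<in> X. cell_lo X u < x}"
  have fT: "finite ?T" using fin by auto
  have neT: "?T \<noteq> {}" using o loS by auto
  have hiT: "cell_hi X u \<in> ?T" unfolding cell_hi_def using Min_in[OF fT neT] .
  show himin: "\<And>x. x \<in> X \<Longrightarrow> cell_lo X u < x \<Longrightarrow> cell_hi X u \<le> x"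
    unfolding cell_hi_def using fT by (intro Min_le) auto
  show "cell_lo X u \<in> X" "cell_hi X u \<in> X" "cell_lo X u \<le> u"
    "cell_lo X u < cell_hi X u" "cell_lo X u < 1" using loS hiT by auto
  show "u \<le> cell_hi X u"
  proof (rule ccontr)
    assume "\<not> u \<le> cell_hi X u"
    hence "cell_hi X u \<le> u" "cell_hi X u < 1" using u by auto
    hence "cell_hi X u \<le> cell_lo X u" using lomax hiT by auto
    thus False using hiT by auto
  qed
qed

definition interp :: "real set \<Rightarrow> (real \<Rightarrow> real) \<Rightarrow> real \<Rightarrow> real" where
  "interp X f u = (1 - (u - cell_lo X u) / (cell_hi X u - cell_lo X u)) * f (cell_lo X u)
     + (u - cell_lo X u) / (cell_hi X u - cell_lo X u) * f (cell_hi X u)"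

lemma interp_grid:
  assumes P: "partition01 X" and g: "g \<in> X"
  shows "interp X f g = f g"
proof -
  have g01: "0 \<le> g" "g \<le> 1" using P g unfolding partition01_def by auto
  note cf = cell_facts[OF P g01]
  show ?thesis
  proof (cases "g < 1")
    case True
    have "cell_lo X g = g" using cf(3) cf(7)[OF g order.refl True] by auto
    thus ?thesis unfolding interp_def by simp
  next
    case False
    hence g1: "g = 1" using g01 by auto
    have "cell_hi X g = 1" using cf(4) cf(2) P unfolding partition01_def g1 by auto
    moreover have "cell_lo X g < 1" using cf(6) .
    ultimately show ?thesis unfolding interp_def using g1 by simp
  qed
qed

lemma interp_cong:
  assumes P: "partition01 X" and u: "0 \<le> u" "u \<le> 1" and fg: "\<And>x. x \<in> X \<Longrightarrow> f x = g x"
  shows "interp X f u = interp X g u"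
  using cell_facts[OF P u] fg unfolding interp_def by simp

definition PL :: "real set \<Rightarrow> (real \<Rightarrow> real) \<Rightarrow> bool" where
  "PL X h \<longleftrightarrow> (\<forall>u. 0 \<le> u \<and> u \<le> 1 \<longrightarrow> h u = interp X h u)"

lemma PL_interp: "partition01 X \<Longrightarrow> PL X (interp X f)"
  unfolding PL_def using interp_cong interp_grid by metis

lemma PL_ext: "PL X f \<Longrightarrow> (\<And>u. g u = f u) \<Longrightarrow> PL X g"
proof -
  assume "PL X f" "\<And>u. g u = f u"
  then have "g = f" by auto
  thus ?thesis using \<open>PL X f\<close> by simp
qed

lemma lin_add: "(1 - s) * (a + b) + s * (c + d) = ((1 - s) * a + s * c) + ((1 - s) * b + s * (d::real))"
  by algebra
lemma lin_diff: "(1 - s) * (a - b) + s * (c - d) = ((1 - s) * a + s * c) - ((1 - s) * b + s * (d::real))"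
  by algebra

lemma PL_add: "PL X f \<Longrightarrow> PL X g \<Longrightarrow> PL X (\<lambda>u. f u + g u)"
  unfolding PL_def interp_def by (simp only: lin_add) metis

lemma PL_diff: "PL X f \<Longrightarrow> PL X g \<Longrightarrow> PL X (\<lambda>u. f u - g u)"
  unfolding PL_def interp_def by (simp only: lin_diff) metis

lemma PL_const: "PL X (\<lambda>u. c)"
  unfolding PL_def interp_def by (auto simp: algebra_simps)

lemma affine_nonneg:
  fixes a b u al be :: real
  assumes "a \<le> u" "u \<le> b" "0 \<le> al + be * a" "0 \<le> al + be * b"
  shows "0 \<le> al + be * u"
proof (cases "be \<ge> 0")
  case True
  hence "be * a \<le> be * u" using assms by (simp add: mult_left_mono)
  thus ?thesis using assms by linarith
next
  case False
  hence "be * b \<le> be * u" using assms by (simp add: mult_left_mono_neg)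
  thus ?thesis using assms by linarith
qed

lemma PL_nonneg:
  assumes P: "partition01 X" and h: "PL X h"
    and pu: "0 \<le> p" "p \<le> u" "u \<le> q" "q \<le> 1"
    and hp: "0 \<le> h p" and hq: "0 \<le> h q"
    and hg: "\<And>g. g \<in> X \<Longrightarrow> p \<le> g \<Longrightarrow> g \<le> q \<Longrightarrow> 0 \<le> h g"
  shows "0 \<le> h u"
proof -
  have u01: "0 \<le> u" "u \<le> 1" using pu by auto
  define lo where "lo = cell_lo X u"
  define hi where "hi = cell_hi X u"
  note cf = cell_facts[OF P u01, folded lo_def hi_def]
  have X01: "\<And>x. x \<in> X \<Longrightarrow> 0 \<le> x \<and> x \<le> 1" using P unfolding partition01_def by auto
  define be where "be = (h hi - h lo) / (hi - lo)"
  define al where "al = h lo - be * lo"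
  have aff: "h w = al + be * w" if w: "lo \<le> w" "w \<le> hi" for w
  proof (cases "w = hi")
    case True
    have "be * (hi - lo) = h hi - h lo" using cf(5) unfolding be_def by simp
    thus ?thesis using True unfolding al_def by (simp add: algebra_simps)
  next
    case False
    hence wh: "w < hi" using w by auto
    have w01: "0 \<le> w" "w \<le> 1" using w wh X01[OF cf(1)] X01[OF cf(2)] by auto
    note cw = cell_facts[OF P w01]
    have "cell_lo X w = lo"
    proof (rule antisym)
      show "lo \<le> cell_lo X w" using cw(7)[OF cf(1) w(1) cf(6)] .
      show "cell_lo X w \<le> lo"
      proof (rule ccontr)
        assume "\<not> cell_lo X w \<le> lo"
        hence "hi \<le> cell_lo X w" using cf(8)[OF cw(1)] by auto
        thus False using cw(3) wh by auto
      qed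
    qed
    moreover have "cell_hi X w = hi"
    proof (rule antisym)
      show "cell_hi X w \<le> hi" using cw(8)[OF cf(2)] cf(5) \<open>cell_lo X w = lo\<close> by auto
      show "hi \<le> cell_hi X w" using cf(8)[OF cw(2)] cw(5) \<open>cell_lo X w = lo\<close> by auto
    qed
    ultimately have "h w = (1 - (w - lo) / (hi - lo)) * h lo + (w - lo) / (hi - lo) * h hi"
      using h w01 unfolding PL_def interp_def by auto
    also have "\<dots> = h lo + (w - lo) / (hi - lo) * (h hi - h lo)" by algebra
    also have "(w - lo) / (hi - lo) * (h hi - h lo) = be * (w - lo)"
      unfolding be_def by simp
    finally show ?thesis unfolding al_def by (simp add: algebra_simps)
  qed
  define a' where "a' = max p lo"
  define b' where "b' = min q hi"
  have a'b: "lo \<le> a'" "a' \<le> u" "u \<le> b'" "b' \<le> hi"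
    using cf pu unfolding a'_def b'_def by auto
  have ha: "0 \<le> h a'"
  proof (cases "p \<le> lo")
    case True thus ?thesis using hg[OF cf(1)] cf pu unfolding a'_def by auto
  next
    case False thus ?thesis using hp unfolding a'_def by auto
  qed
  have hb: "0 \<le> h b'"
  proof (cases "hi \<le> q")
    case True thus ?thesis using hg[OF cf(2)] cf pu unfolding b'_def by auto
  next
    case False thus ?thesis using hq unfolding b'_def by auto
  qed
  have "0 \<le> al + be * a'" using ha aff[of a'] a'b by auto
  moreover have "0 \<le> al + be * b'" using hb aff[of b'] a'b by auto
  ultimately have "0 \<le> al + be * u" using affine_nonneg a'b by blast
  thus ?thesis using aff[of u] a'b by auto
qed



lemma X01: "partition01 X \<Longrightarrow> x \<in> X \<Longrightarrow> 0 \<le> x \<and> x \<le> 1"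
  unfolding partition01_def by auto

lemma reduce2:
  assumes P: "partition01 X"
    and PL1: "\<And>x2. PL X (\<lambda>x1. E x1 x2)" and PL2: "\<And>x1. PL X (\<lambda>x2. E x1 x2)"
    and grid: "\<And>g1 g2. g1 \<in> X \<Longrightarrow> g2 \<in> X \<Longrightarrow> g1 \<le> g2 \<Longrightarrow> 0 \<le> E g1 g2"
    and diag: "\<And>x. 0 \<le> x \<Longrightarrow> x \<le> 1 \<Longrightarrow> 0 \<le> E x x"
    and x: "0 \<le> x1" "x1 \<le> x2" "x2 \<le> 1"
  shows "0 \<le> E x1 x2"
proof -
  have z: "0 \<in> X" and o: "1 \<in> X" using P unfolding partition01_def by auto
  have half: "0 \<le> E y g" if g: "g \<in> X" and y: "0 \<le> y" "y \<le> g" for y g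
    using PL_nonneg[OF P PL1[of g], of 0 y g] y X01[OF P g] grid[OF z g] diag[of g] grid[OF _ g]
    by auto
  show ?thesis
    using PL_nonneg[OF P PL2[of x1], of x1 x2 1] x diag[of x1] half[OF o, of x1] half
    by auto
qed

lemma reduce4:
  assumes PX: "partition01 X" and PY: "partition01 Y"
    and PL1: "\<And>x2 y1 y2. PL X (\<lambda>x1. E x1 x2 y1 y2)"
    and PL2: "\<And>x1 y1 y2. PL X (\<lambda>x2. E x1 x2 y1 y2)"
    and PL3: "\<And>x1 x2 y2. PL Y (\<lambda>y1. E x1 x2 y1 y2)"
    and PL4: "\<And>x1 x2 y1. PL Y (\<lambda>y2. E x1 x2 y1 y2)"
    and grid: "\<And>g1 g2 h1 h2. g1 \<in> X \<Longrightarrow> g2 \<in> X \<Longrightarrow> h1 \<in> Y \<Longrightarrow> h2 \<in> Y \<Longrightarrow>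
        g1 \<le> g2 \<Longrightarrow> h1 \<le> h2 \<Longrightarrow> 0 \<le> E g1 g2 h1 h2"
    and diagx: "\<And>x y1 y2. 0 \<le> x \<Longrightarrow> x \<le> 1 \<Longrightarrow> 0 \<le> y1 \<Longrightarrow> y1 \<le> y2 \<Longrightarrow> y2 \<le> 1 \<Longrightarrow> 0 \<le> E x x y1 y2"
    and diagy: "\<And>x1 x2 y. 0 \<le> x1 \<Longrightarrow> x1 \<le> x2 \<Longrightarrow> x2 \<le> 1 \<Longrightarrow> 0 \<le> y \<Longrightarrow> y \<le> 1 \<Longrightarrow> 0 \<le> E x1 x2 y y"
    and x: "0 \<le> x1" "x1 \<le> x2" "x2 \<le> 1" and y: "0 \<le> y1" "y1 \<le> y2" "y2 \<le> 1"
  shows "0 \<le> E x1 x2 y1 y2"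
proof -
  have gy: "0 \<le> E g1 g2 y1 y2" if "g1 \<in> X" "g2 \<in> X" "g1 \<le> g2" for g1 g2
    using reduce2[OF PY PL3 PL4, of g1 g2 y1 y2] grid that diagy[of g1 g2] X01[OF PX] y by auto
  show ?thesis
    using reduce2[OF PX PL1 PL2, of y1 y2 x1 x2] gy diagx x y by auto
qed

lemma blin1: "(1 - s) * (1 - t) * a + s * (1 - t) * b + (1 - s) * t * c + s * t * (d::real)
  = (1 - s) * ((1 - t) * a + t * c) + s * ((1 - t) * b + t * d)" by algebra
lemma blin2: "(1 - s) * (1 - t) * a + s * (1 - t) * b + (1 - s) * t * c + s * t * (d::real)
  = (1 - t) * ((1 - s) * a + s * b) + t * ((1 - s) * c + s * d)" by algebra

lemma bl_x: "bilinear_ext X Y A (u, v) = interp X (\<lambda>x. interp Y (\<lambda>y. A (x, y)) v) u"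
  unfolding bilinear_ext_def interp_def Let_def by (simp only: prod.case) (rule blin1)

lemma bl_y: "bilinear_ext X Y A (u, v) = interp Y (\<lambda>y. interp X (\<lambda>x. A (x, y)) u) v"
  unfolding bilinear_ext_def interp_def Let_def by (simp only: prod.case) (rule blin2)

lemma PL_blx: "partition01 X \<Longrightarrow> PL X (\<lambda>u. bilinear_ext X Y A (u, v))"
  by (rule PL_ext[OF PL_interp]) (assumption, rule bl_x)

lemma PL_bly: "partition01 Y \<Longrightarrow> PL Y (\<lambda>v. bilinear_ext X Y A (u, v))"
  by (rule PL_ext[OF PL_interp]) (assumption, rule bl_y)

lemma bl_grid: "partition01 X \<Longrightarrow> partition01 Y \<Longrightarrow> g \<in> X \<Longrightarrow> h \<in> Y \<Longrightarrow>
   bilinear_ext X Y A (g, h) = A (g, h)"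
  by (simp add: bl_x interp_grid)

lemma bl_gridx: "partition01 X \<Longrightarrow> g \<in> X \<Longrightarrow>
   bilinear_ext X Y A (g, v) = interp Y (\<lambda>y. A (g, y)) v"
  by (simp add: bl_x interp_grid)

lemma bl_gridy: "partition01 Y \<Longrightarrow> h \<in> Y \<Longrightarrow>
   bilinear_ext X Y A (u, h) = interp X (\<lambda>x. A (x, h)) u"
  by (simp add: bl_y interp_grid)

lemma interp_id: "partition01 X \<Longrightarrow> 0 \<le> u \<Longrightarrow> u \<le> 1 \<Longrightarrow> interp X (\<lambda>x. x) u = u"
proof -
  assume P: "partition01 X" and u: "0 \<le> u" "u \<le> 1"
  note cf = cell_facts[OF P u]
  define lo where "lo = cell_lo X u"
  define hi where "hi = cell_hi X u"
  have "hi - lo \<noteq> 0" using cf(5) unfolding lo_def hi_def by simp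
  have "(1 - (u - lo) / (hi - lo)) * lo + (u - lo) / (hi - lo) * hi = lo + (u - lo) / (hi - lo) * (hi - lo)"
    by algebra
  also have "\<dots> = u" using \<open>hi - lo \<noteq> 0\<close> by simp
  finally have "(1 - (u - lo) / (hi - lo)) * lo + (u - lo) / (hi - lo) * hi = u" .
  thus ?thesis unfolding interp_def lo_def hi_def .
qed

lemma interp_zero: "partition01 X \<Longrightarrow> 0 \<le> u \<Longrightarrow> u \<le> 1 \<Longrightarrow> (\<And>x. x \<in> X \<Longrightarrow> f x = 0) \<Longrightarrow> interp X f u = 0"
  using interp_cong[of X u f "\<lambda>_. 0"] by (simp add: interp_def)

lemma interp_idc: "partition01 X \<Longrightarrow> 0 \<le> u \<Longrightarrow> u \<le> 1 \<Longrightarrow> (\<And>x. x \<in> X \<Longrightarrow> f x = x) \<Longrightarrow> interp X f u = u"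
  using interp_cong[of X u f "\<lambda>x. x"] interp_id by simp



lemmas PL_intros = PL_add PL_diff PL_const PL_blx PL_bly

theorem mainTheorem5:
  fixes X Y :: "real set" and A B :: "real \<times> real \<Rightarrow> real"
  assumes "partition01 X" and "partition01 Y"
  shows "(imprecise_copula X Y A B \<longrightarrow>
            imprecise_copula {0..1} {0..1} (bilinear_ext X Y A) (bilinear_ext X Y B))
       \<and> (imprecise_copula {0..1} {0..1} A B \<longrightarrow> imprecise_copula X Y A B)"
proof (intro conjI impI)
  assume "imprecise_copula {0..1} {0..1} A B"
  thus "imprecise_copula X Y A B"
    using assms unfolding imprecise_copula_def partition01_def
    by (meson subsetD)
next
  assume IC: "imprecise_copula X Y A B"
  note PX = assms(1) and PY = assms(2)
  have z: "0 \<in> X" "1 \<in> X" "0 \<in> Y" "1 \<in> Y" using assms unfolding partition01_def by auto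
  define F where "F = bilinear_ext X Y A"
  define G where "G = bilinear_ext X Y B"
  have gridA: "\<And>g h. g \<in> X \<Longrightarrow> h \<in> Y \<Longrightarrow> F (g, h) = A (g, h)"
    unfolding F_def using bl_grid[OF PX PY] by blast
  have gridB: "\<And>g h. g \<in> X \<Longrightarrow> h \<in> Y \<Longrightarrow> G (g, h) = B (g, h)"
    unfolding G_def using bl_grid[OF PX PY] by blast
  have BA: "A (g, h) \<le> B (g, h)" if "g \<in> X" "h \<in> Y" for g h
    using IC that unfolding imprecise_copula_def by fastforce
  have PLx: "PL X (\<lambda>u. F (u, v))" "PL X (\<lambda>u. G (u, v))" for v
    unfolding F_def G_def by (rule PL_blx[OF PX])+
  have PLy: "PL Y (\<lambda>v. F (u, v))" "PL Y (\<lambda>v. G (u, v))" for u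
    unfolding F_def G_def by (rule PL_bly[OF PY])+
  have GFg: "0 \<le> G (g, v) - F (g, v)" if g: "g \<in> X" and v: "0 \<le> v" "v \<le> 1" for g v
    using PL_nonneg[OF PY PL_diff[OF PLy(2) PLy(1)], of 0 v 1 g] v z gridA gridB BA g
    by auto
  have GF: "F (u, v) \<le> G (u, v)" if u: "0 \<le> u" "u \<le> 1" and v: "0 \<le> v" "v \<le> 1" for u v
    using PL_nonneg[OF PX PL_diff[OF PLx(2) PLx(1)], of 0 u 1 v] u z GFg[OF _ v] by auto
  have ICg: "\<And>x1 x2 y1 y2. x1 \<in> X \<Longrightarrow> x2 \<in> X \<Longrightarrow> y1 \<in> Y \<Longrightarrow> y2 \<in> Y \<Longrightarrow> x1 \<le> x2 \<Longrightarrow> y1 \<le> y2 \<Longrightarrow>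
        A (x1, y1) + B (x2, y2) - A (x2, y1) - A (x1, y2) \<ge> 0 \<and>
        B (x1, y1) + A (x2, y2) - A (x2, y1) - A (x1, y2) \<ge> 0 \<and>
        B (x1, y1) + B (x2, y2) - B (x2, y1) - A (x1, y2) \<ge> 0 \<and>
        B (x1, y1) + B (x2, y2) - A (x2, y1) - B (x1, y2) \<ge> 0"
    using IC unfolding imprecise_copula_def by blast
  have b1: "F (x, 0) = 0 \<and> G (x, 0) = 0" if "0 \<le> x" "x \<le> 1" for x
    unfolding F_def G_def using IC that z
    by (simp add: bl_gridy[OF PY] interp_zero[OF PX] imprecise_copula_def)
  have b2: "F (0, y) = 0 \<and> G (0, y) = 0" if "0 \<le> y" "y \<le> 1" for y
    unfolding F_def G_def using IC that z
    by (simp add: bl_gridx[OF PX] interp_zero[OF PY] imprecise_copula_def)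
  have b3: "F (x, 1) = x \<and> G (x, 1) = x" if "0 \<le> x" "x \<le> 1" for x
    unfolding F_def G_def using IC that z
    by (simp add: bl_gridy[OF PY] interp_idc[OF PX] imprecise_copula_def)
  have b4: "F (1, y) = y \<and> G (1, y) = y" if "0 \<le> y" "y \<le> 1" for y
    unfolding F_def G_def using IC that z
    by (simp add: bl_gridx[OF PX] interp_idc[OF PY] imprecise_copula_def)
  have R: "0 \<le> E x1 x2 y1 y2"
    if "\<And>x2 y1 y2. PL X (\<lambda>x1. E x1 x2 y1 y2)"
     "\<And>x1 y1 y2. PL X (\<lambda>x2. E x1 x2 y1 y2)"
     "\<And>x1 x2 y2. PL Y (\<lambda>y1. E x1 x2 y1 y2)"
     "\<And>x1 x2 y1. PL Y (\<lambda>y2. E x1 x2 y1 y2)"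
     "\<And>g1 g2 h1 h2. g1 \<in> X \<Longrightarrow> g2 \<in> X \<Longrightarrow> h1 \<in> Y \<Longrightarrow> h2 \<in> Y \<Longrightarrow>
        g1 \<le> g2 \<Longrightarrow> h1 \<le> h2 \<Longrightarrow> 0 \<le> E g1 g2 h1 h2"
     "\<And>x y1 y2. 0 \<le> x \<Longrightarrow> x \<le> 1 \<Longrightarrow> 0 \<le> y1 \<Longrightarrow> y1 \<le> y2 \<Longrightarrow> y2 \<le> 1 \<Longrightarrow> 0 \<le> E x x y1 y2"
     "\<And>x1 x2 y. 0 \<le> x1 \<Longrightarrow> x1 \<le> x2 \<Longrightarrow> x2 \<le> 1 \<Longrightarrow> 0 \<le> y \<Longrightarrow> y \<le> 1 \<Longrightarrow> 0 \<le> E x1 x2 y y"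
     "0 \<le> x1" "x1 \<le> x2" "x2 \<le> 1" "0 \<le> y1" "y1 \<le> y2" "y2 \<le> 1"
    for E :: "real \<Rightarrow> real \<Rightarrow> real \<Rightarrow> real \<Rightarrow> real" and x1 x2 y1 y2
    using reduce4[OF PX PY that] .
  note PLI = PL_add PL_diff PL_const PLx PLy
  have "x1 \<in> {0..1} \<Longrightarrow> x2 \<in> {0..1} \<Longrightarrow> y1 \<in> {0..1} \<Longrightarrow> y2 \<in> {0..1} \<Longrightarrow> x1 \<le> x2 \<Longrightarrow> y1 \<le> y2 \<Longrightarrow>
        F (x1, y1) + G (x2, y2) - F (x2, y1) - F (x1, y2) \<ge> 0 \<and>
        G (x1, y1) + F (x2, y2) - F (x2, y1) - F (x1, y2) \<ge> 0 \<and>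
        G (x1, y1) + G (x2, y2) - G (x2, y1) - F (x1, y2) \<ge> 0 \<and>
        G (x1, y1) + G (x2, y2) - F (x2, y1) - G (x1, y2) \<ge> 0" for x1 x2 y1 y2
  proof (intro conjI)
    assume "x1 \<in> {0..1}" "x2 \<in> {0..1}" "y1 \<in> {0..1}" "y2 \<in> {0..1}" "x1 \<le> x2" "y1 \<le> y2"
    hence r: "0 \<le> x1" "x1 \<le> x2" "x2 \<le> 1" "0 \<le> y1" "y1 \<le> y2" "y2 \<le> 1" by auto
    show "F (x1, y1) + G (x2, y2) - F (x2, y1) - F (x1, y2) \<ge> 0"
      apply (rule R[where E="\<lambda>x1 x2 y1 y2. F (x1, y1) + G (x2, y2) - F (x2, y1) - F (x1, y2)"])
      apply (intro PLI)+
      subgoal for g1 g2 h1 h2 using ICg[of g1 g2 h1 h2] by (simp add: gridA gridB)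
      subgoal for x y1 y2 using GF[of x y2] by simp
      subgoal for x1 x2 y using GF[of x2 y] by simp
      using r by auto
    show "G (x1, y1) + F (x2, y2) - F (x2, y1) - F (x1, y2) \<ge> 0"
      apply (rule R[where E="\<lambda>x1 x2 y1 y2. G (x1, y1) + F (x2, y2) - F (x2, y1) - F (x1, y2)"])
      apply (intro PLI)+
      subgoal for g1 g2 h1 h2 using ICg[of g1 g2 h1 h2] by (simp add: gridA gridB)
      subgoal for x y1 y2 using GF[of x y1] by simp
      subgoal for x1 x2 y using GF[of x1 y] by simp
      using r by auto
    show "G (x1, y1) + G (x2, y2) - G (x2, y1) - F (x1, y2) \<ge> 0"
      apply (rule R[where E="\<lambda>x1 x2 y1 y2. G (x1, y1) + G (x2, y2) - G (x2, y1) - F (x1, y2)"])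
      apply (intro PLI)+
      subgoal for g1 g2 h1 h2 using ICg[of g1 g2 h1 h2] by (simp add: gridA gridB)
      subgoal for x y1 y2 using GF[of x y2] by simp
      subgoal for x1 x2 y using GF[of x1 y] by simp
      using r by auto
    show "G (x1, y1) + G (x2, y2) - F (x2, y1) - G (x1, y2) \<ge> 0"
      apply (rule R[where E="\<lambda>x1 x2 y1 y2. G (x1, y1) + G (x2, y2) - F (x2, y1) - G (x1, y2)"])
      apply (intro PLI)+
      subgoal for g1 g2 h1 h2 using ICg[of g1 g2 h1 h2] by (simp add: gridA gridB)
      subgoal for x y1 y2 using GF[of x y1] by simp
      subgoal for x1 x2 y using GF[of x2 y] by simp
      using r by auto
  qed
  thus "imprecise_copula {0..1} {0..1} (bilinear_ext X Y A) (bilinear_ext X Y B)"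
    unfolding imprecise_copula_def F_def[symmetric] G_def[symmetric]
    using b1 b2 b3 b4 by auto
qed


end
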